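(* Let $U,X,Y$ be Banach spaces and let $S$ be a $(U,X,Y)$-relation. If $S=\operatorname{Sys}(A,B,C)=\operatorname{Sys}(A',B',C')$, where $A$ and $A'$ generate strongly continuous semigroups on $X$, $B,B':U\to X$ are bounded, and $C:\operatorname{Dom}(A)\to Y$, $C':\operatorname{Dom}(A')\to Y$ are bounded for the respective graph norms, then $A=A'$ (including equality of domains), $B=B'$ and $C=C'$.
   Context: For Banach spaces $U,X,Y$, a $(U,X,Y)$-relation is any subset of $C^0(\mathbb{R}_{\ge 0},U)\times C^0(\mathbb{R}_{\ge 0},X)\times C^0(\mathbb{R}_{\ge 0},Y)$; its elements $(u,x,y)$ are called input, state and output. If $A$ generates a strongly continuous semigroup $(e^{At})_{t\ge0}$ on $X$, $B:U\to X$ is bounded and $C:\operatorname{Dom}(A)\to Y$ is bounded for the graph norm of $A$, then $\operatorname{Sys}(A,B,C)$ denotes the $(U,X,Y)$-relation consisting of all $(u,x,y)$ with $u\in C^0(\mathbb{R}_{\ge0},U)$, $x\in C^0(\mathbb{R}_{\ge0},\operatorname{Dom}(A))\cap C^1(\mathbb{R}_{\ge0},X)$, $y\in C^0(\mathbb{R}_{\ge0},Y)$ satisfying $\dot x(t)=Ax(t)+Bu(t)$ and $y(t)=Cx(t)$ for all $t\ge0$. *)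

theory Defs
  imports "HOL-Analysis.Analysis"
begin

text \<open>Strongly continuous (C0) semigroup of bounded linear operators on a Banach space,
  indexed by t \<ge> 0 (values for t < 0 are irrelevant).\<close>
definition c0_semigroup :: "(real \<Rightarrow> 'a::banach \<Rightarrow> 'a) \<Rightarrow> bool" where
  "c0_semigroup T \<longleftrightarrow>
     (\<forall>t\<ge>0. bounded_linear (T t)) \<and> T 0 = id \<and>
     (\<forall>s\<ge>0. \<forall>t\<ge>0. T (s + t) = T s \<circ> T t) \<and>
     (\<forall>x. continuous_on {0..} (\<lambda>t. T t x))"

definition generator_dom :: "(real \<Rightarrow> 'a::banach \<Rightarrow> 'a) \<Rightarrow> 'a set" where
  "generator_dom T = {x. \<exists>v. ((\<lambda>h. inverse h *\<^sub>R (T h x - x)) \<longlongrightarrow> v) (at_right 0)}"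

text \<open>The operator A with domain D is the generator of T (A is only meaningful on D).\<close>
definition generates :: "(real \<Rightarrow> 'a::banach \<Rightarrow> 'a) \<Rightarrow> 'a set \<Rightarrow> ('a \<Rightarrow> 'a) \<Rightarrow> bool" where
  "generates T D A \<longleftrightarrow> D = generator_dom T \<and>
     (\<forall>x\<in>D. ((\<lambda>h. inverse h *\<^sub>R (T h x - x)) \<longlongrightarrow> A x) (at_right 0))"

definition is_c0_generator :: "'a::banach set \<Rightarrow> ('a \<Rightarrow> 'a) \<Rightarrow> bool" where
  "is_c0_generator D A \<longleftrightarrow> (\<exists>T. c0_semigroup T \<and> generates T D A)"

definition graph_bounded ::
  "'x::banach set \<Rightarrow> ('x \<Rightarrow> 'x) \<Rightarrow> ('x \<Rightarrow> 'y::banach) \<Rightarrow> bool" where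
  "graph_bounded D A C \<longleftrightarrow>
     (\<forall>x\<in>D. \<forall>z\<in>D. C (x + z) = C x + C z) \<and>
     (\<forall>c. \<forall>x\<in>D. C (c *\<^sub>R x) = c *\<^sub>R C x) \<and>
     (\<exists>K. \<forall>x\<in>D. norm (C x) \<le> K * (norm x + norm (A x)))"

text \<open>Sys(A,B,C): functions on the reals, of which only the restriction to [0,\<infinity>) matters.
  Continuity of x into Dom(A) (with the graph norm) means x(t) \<in> D and both x and A \<circ> x
  are continuous.\<close>
definition Sys ::
  "'x::banach set \<Rightarrow> ('x \<Rightarrow> 'x) \<Rightarrow> ('u::banach \<Rightarrow> 'x) \<Rightarrow> ('x \<Rightarrow> 'y::banach)
   \<Rightarrow> ((real \<Rightarrow> 'u) \<times> (real \<Rightarrow> 'x) \<times> (real \<Rightarrow> 'y)) set" where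
  "Sys D A B C = {(u, x, y).
     continuous_on {0..} u \<and>
     (\<forall>t\<ge>0. x t \<in> D) \<and> continuous_on {0..} x \<and> continuous_on {0..} (\<lambda>t. A (x t)) \<and>
     (\<exists>x'. continuous_on {0..} x' \<and> (\<forall>t\<ge>0. (x has_vector_derivative x' t) (at t within {0..}))
        \<and> (\<forall>t\<ge>0. x' t = A (x t) + B (u t))) \<and>
     continuous_on {0..} y \<and> (\<forall>t\<ge>0. y t = C (x t))}"

end

theory Submission
  imports Defs
begin


lemma avg_lim:
  fixes f :: "real \<Rightarrow> 'a::banach"
  assumes f: "continuous_on {0..} f" and t: "t \<ge> 0"
  shows "((\<lambda>h. inverse h *\<^sub>R integral {t..t+h} f) \<longlongrightarrow> f t) (at_right 0)"
proof (rule tendstoI)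
  fix e :: real assume e: "e > 0"
  from f t e obtain d where d: "d > 0" and dd: "\<And>s. s \<in> {0..} \<Longrightarrow> dist s t < d \<Longrightarrow> dist (f s) (f t) < e/2"
    unfolding continuous_on_iff by (metis atLeast_iff half_gt_zero)
  have "eventually (\<lambda>h. h \<in> {0<..<d}) (at_right (0::real))"
    using eventually_at_right_real d by blast
  then show "eventually (\<lambda>h. dist (inverse h *\<^sub>R integral {t..t+h} f) (f t) < e) (at_right 0)"
  proof eventually_elim
    case (elim h)
    hence h: "0 < h" "h < d" by auto
    have cf: "continuous_on {t..t+h} f" by (rule continuous_on_subset[OF f]) (use t in auto)
    have cc: "continuous_on {t..t+h} (\<lambda>s. f s - f t)" using cf by (intro continuous_intros)
    have i1: "integral {t..t+h} (\<lambda>s. f s - f t) = integral {t..t+h} f - h *\<^sub>R f t"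
      using integrable_continuous_interval[OF cf] h by (subst integral_diff) (auto simp: integral_const_real)
    have "norm (integral {t..t+h} (\<lambda>s. f s - f t)) \<le> (e/2) * ((t+h) - t)"
      apply (rule integral_bound[OF _ cc])
      using h t dd by (auto simp: dist_norm less_imp_le)
    hence "norm (integral {t..t+h} f - h *\<^sub>R f t) \<le> (e/2) * h" using i1 by simp
    hence "inverse h * norm (integral {t..t+h} f - h *\<^sub>R f t) \<le> e/2"
      using h by (simp add: field_simps)
    moreover have "inverse h *\<^sub>R integral {t..t+h} f - f t = inverse h *\<^sub>R (integral {t..t+h} f - h *\<^sub>R f t)"
      using h by (simp add: algebra_simps)
    ultimately show ?case using h e by (simp add: dist_norm)
  qed
qed



lemma right_deriv_zero_const:
  fixes g :: "real \<Rightarrow> 'a::real_normed_vector"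
  assumes ab: "a \<le> b" and gc: "continuous_on {a..b} g"
  and gd: "\<And>t. t \<in> {a..<b} \<Longrightarrow> ((\<lambda>h. inverse h *\<^sub>R (g (t+h) - g t)) \<longlongrightarrow> 0) (at_right 0)"
  shows "g b = g a"
proof -
  have key: "norm (g b - g a) \<le> e * (b - a)" if e: "e > 0" for e
  proof -
    define P where "P = {s \<in> {a..b}. norm (g s - g a) \<le> e * (s - a)}"
    have "closed P" unfolding P_def
      by (intro continuous_on_closed_Collect_le continuous_intros gc)
    moreover have "a \<in> P" using ab by (simp add: P_def)
    moreover have bdd: "bdd_above P" unfolding P_def by (rule bdd_aboveI[of _ b]) auto
    ultimately have cP: "Sup P \<in> P" using closed_contains_Sup by blast
    define c where "c = Sup P"
    have cb: "c \<le> b" using cP by (simp add: c_def P_def)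
    have ca: "a \<le> c" using cP by (simp add: c_def P_def)
    have "c = b"
    proof (rule ccontr)
      assume "c \<noteq> b" hence cb': "c < b" using cb by simp
      have "eventually (\<lambda>h. norm (inverse h *\<^sub>R (g (c+h) - g c) - 0) < e) (at_right 0)"
        using gd[of c] ca cb' e by (simp add: tendsto_iff dist_norm)
      moreover have "eventually (\<lambda>h. h \<in> {0<..<b-c}) (at_right (0::real))"
        using eventually_at_right_real cb' by simp
      ultimately have "eventually (\<lambda>h. norm (inverse h *\<^sub>R (g (c+h) - g c)) < e \<and> h \<in> {0<..<b-c}) (at_right (0::real))"
        by eventually_elim auto
      then obtain h where h1: "norm (inverse h *\<^sub>R (g (c+h) - g c)) < e" and h2: "0 < h" "h < b - c"
        using eventually_happens'[OF trivial_limit_at_right_real[of 0], of "\<lambda>h. norm (inverse h *\<^sub>R (g (c+h) - g c)) < e \<and> h \<in> {0<..<b-c}"] by (metis greaterThanLessThan_iff)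
      have "norm (g (c+h) - g c) = h * norm (inverse h *\<^sub>R (g (c+h) - g c))"
        using h2 by simp
      also have "\<dots> \<le> h * e" using h1 h2 by simp
      finally have n1: "norm (g (c+h) - g c) \<le> e * h" by (simp add: mult.commute)
      have n2: "norm (g c - g a) \<le> e * (c - a)" using cP by (simp add: c_def P_def)
      have "norm (g (c+h) - g a) \<le> norm (g (c+h) - g c) + norm (g c - g a)"
        using norm_triangle_ineq[of "g (c+h) - g c" "g c - g a"] by simp
      also have "\<dots> \<le> e * (c + h - a)" using n1 n2 by (simp add: algebra_simps)
      finally have "c + h \<in> P" using h2 ca by (simp add: P_def)
      hence "c + h \<le> c" unfolding c_def using bdd by (rule cSup_upper)
      thus False using h2 by simp
    qed
    thus ?thesis using cP by (simp add: c_def P_def)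
  qed
  show ?thesis
  proof (rule ccontr)
    assume "g b \<noteq> g a"
    hence n: "norm (g b - g a) > 0" by simp
    define e where "e = norm (g b - g a) / (b - a + 1)"
    have e: "e > 0" using n ab by (simp add: e_def)
    have "e * (b - a) < norm (g b - g a)" using n ab
      by (simp add: e_def field_simps)
    thus False using key[OF e] by simp
  qed
qed



locale sg =
  fixes T :: "real \<Rightarrow> 'a::banach \<Rightarrow> 'a" and D :: "'a set" and A :: "'a \<Rightarrow> 'a"
  assumes c0: "c0_semigroup T" and gen: "generates T D A"
begin

lemma bl: "t \<ge> 0 \<Longrightarrow> bounded_linear (T t)"
  using c0 by (simp add: c0_semigroup_def)

lemma T0: "T 0 x = x"
  using c0 by (simp add: c0_semigroup_def)

lemma comm: "s \<ge> 0 \<Longrightarrow> t \<ge> 0 \<Longrightarrow> T s (T t x) = T (s+t) x"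
  using c0 unfolding c0_semigroup_def by (metis comp_apply)

lemma cont: "continuous_on {0..} (\<lambda>t. T t x)"
  using c0 by (simp add: c0_semigroup_def)

lemma genD: "x \<in> D \<Longrightarrow> ((\<lambda>h. inverse h *\<^sub>R (T h x - x)) \<longlongrightarrow> A x) (at_right 0)"
  using gen by (simp add: generates_def)

lemma genI: assumes "((\<lambda>h. inverse h *\<^sub>R (T h x - x)) \<longlongrightarrow> v) (at_right 0)"
  shows "x \<in> D \<and> A x = v"
proof -
  have xD: "x \<in> D" using gen assms by (auto simp: generates_def generator_dom_def)
  thus ?thesis using genD[OF xD] assms tendsto_unique[OF trivial_limit_at_right_real] by blast
qed

lemma ev_pos: "eventually (\<lambda>h::real. h > 0) (at_right 0)"
  by (simp add: eventually_at_right_less)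

lemma lin_diff: assumes "x \<in> D" "z \<in> D" shows "x - z \<in> D \<and> A (x - z) = A x - A z"
proof (rule genI)
  have "((\<lambda>h. inverse h *\<^sub>R (T h x - x) - inverse h *\<^sub>R (T h z - z)) \<longlongrightarrow> A x - A z) (at_right 0)"
    using genD[OF assms(1)] genD[OF assms(2)] by (rule tendsto_diff)
  moreover have "eventually (\<lambda>h. inverse h *\<^sub>R (T h x - x) - inverse h *\<^sub>R (T h z - z) =
      inverse h *\<^sub>R (T h (x - z) - (x - z))) (at_right 0)"
    using ev_pos
  proof eventually_elim
    case (elim h)
    then interpret bounded_linear "T h" using bl by simp
    show ?case by (simp add: diff algebra_simps)
  qed
  ultimately show "((\<lambda>h. inverse h *\<^sub>R (T h (x - z) - (x - z))) \<longlongrightarrow> A x - A z) (at_right 0)"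
    by (rule Lim_transform_eventually)
qed

lemma zero: "0 \<in> D \<and> A 0 = 0"
proof (rule genI)
  have ev: "eventually (\<lambda>h. inverse h *\<^sub>R (T h 0 - 0) = 0) (at_right 0)"
    using ev_pos
  proof eventually_elim
    case (elim h)
    then interpret bounded_linear "T h" using bl by simp
    show ?case by (simp add: zero)
  qed
  show "((\<lambda>h. inverse h *\<^sub>R (T h 0 - 0)) \<longlongrightarrow> 0) (at_right 0)"
    by (rule tendsto_eventually[OF ev])
qed

lemma orbit: assumes "x \<in> D" "t \<ge> 0" shows "T t x \<in> D \<and> A (T t x) = T t (A x)"
proof (rule genI)
  have "((\<lambda>h. T t (inverse h *\<^sub>R (T h x - x))) \<longlongrightarrow> T t (A x)) (at_right 0)"
    using bounded_linear.tendsto[OF bl[OF assms(2)] genD[OF assms(1)]] .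
  moreover have "eventually (\<lambda>h. T t (inverse h *\<^sub>R (T h x - x)) = inverse h *\<^sub>R (T h (T t x) - T t x)) (at_right 0)"
    using ev_pos
  proof eventually_elim
    case (elim h)
    interpret bounded_linear "T t" using bl assms by simp
    have "T h (T t x) = T t (T h x)" using comm elim assms by (simp add: add.commute)
    thus ?case by (simp add: diff scale)
  qed
  ultimately show "((\<lambda>h. inverse h *\<^sub>R (T h (T t x) - T t x)) \<longlongrightarrow> T t (A x)) (at_right 0)"
    by (rule Lim_transform_eventually)
qed

lemma cont_sub: "continuous_on {a..b} (\<lambda>t. T t x)" if "a \<ge> 0"
  by (rule continuous_on_subset[OF cont]) (use that in auto)

lemma intg: "(\<lambda>s. T s x) integrable_on {a..b}" if "a \<ge> 0"
  by (rule integrable_continuous_interval[OF cont_sub[OF that]])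

lemma integ: assumes t: "t \<ge> 0"
  shows "integral {0..t} (\<lambda>s. T s z) \<in> D \<and> A (integral {0..t} (\<lambda>s. T s z)) = T t z - z"
proof (rule genI)
  define F where "F = (\<lambda>s. T s z)"
  have "((\<lambda>h. inverse h *\<^sub>R integral {t..t+h} F - inverse h *\<^sub>R integral {0..0+h} F) \<longlongrightarrow> F t - F 0) (at_right 0)"
    unfolding F_def by (intro tendsto_diff avg_lim cont t) simp
  moreover have "eventually (\<lambda>h. inverse h *\<^sub>R integral {t..t+h} F - inverse h *\<^sub>R integral {0..0+h} F =
     inverse h *\<^sub>R (T h (integral {0..t} F) - integral {0..t} F)) (at_right 0)"
    using ev_pos
  proof eventually_elim
    case (elim h)
    have "T h (integral {0..t} F) = integral {0..t} (T h \<circ> F)"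
      by (rule integral_linear[symmetric]) (use intg bl elim in \<open>auto simp: F_def\<close>)
    also have "\<dots> = integral {0..t} (F \<circ> (+) h)"
      using comm elim by (intro integral_cong) (auto simp: F_def)
    also have "\<dots> = integral {h..t+h} F" by (simp add: integral_shift_Icc_real add.commute)
    finally have 1: "T h (integral {0..t} F) = integral {h..t+h} F" .
    have 2: "integral {0..h} F + integral {h..t+h} F = integral {0..t+h} F"
      by (rule Henstock_Kurzweil_Integration.integral_combine) (use elim t intg in \<open>auto simp: F_def\<close>)
    have 3: "integral {0..t} F + integral {t..t+h} F = integral {0..t+h} F"
      by (rule Henstock_Kurzweil_Integration.integral_combine) (use elim t intg in \<open>auto simp: F_def\<close>)
    have "T h (integral {0..t} F) - integral {0..t} F = integral {t..t+h} F - integral {0..h} F"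
      using 1 2 3 by (simp add: algebra_simps)
    thus ?case by (metis scaleR_diff_right add_0)
  qed
  ultimately show "((\<lambda>h. inverse h *\<^sub>R (T h (integral {0..t} (\<lambda>s. T s z)) - integral {0..t} (\<lambda>s. T s z))) \<longlongrightarrow> T t z - z) (at_right 0)"
    unfolding F_def T0 by (rule Lim_transform_eventually)
qed

lemma orbit_int: assumes x: "x \<in> D" and t: "t \<ge> 0"
  shows "T t x = x + integral {0..t} (\<lambda>s. T s (A x))"
proof -
  define G where "G = (\<lambda>s. T s (A x))"
  define g where "g = (\<lambda>\<tau>. T \<tau> x - integral {0..\<tau>} G)"
  have "g t = g 0"
  proof (rule right_deriv_zero_const[OF t])
    show "continuous_on {0..t} g" unfolding g_def G_def
      by (intro continuous_intros cont_sub indefinite_integral_continuous_1 intg) simp_all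
  next
    fix \<tau> assume tau: "\<tau> \<in> {0..<t}"
    have "((\<lambda>h. T \<tau> (inverse h *\<^sub>R (T h x - x)) - inverse h *\<^sub>R integral {\<tau>..\<tau>+h} G) \<longlongrightarrow> T \<tau> (A x) - G \<tau>) (at_right 0)"
      apply (intro tendsto_diff bounded_linear.tendsto[OF bl] genD x)
      using tau apply simp
      unfolding G_def apply (rule avg_lim) apply (rule cont) using tau by simp
    moreover have "eventually (\<lambda>h. T \<tau> (inverse h *\<^sub>R (T h x - x)) - inverse h *\<^sub>R integral {\<tau>..\<tau>+h} G =
       inverse h *\<^sub>R (g (\<tau>+h) - g \<tau>)) (at_right 0)"
      using ev_pos
    proof eventually_elim
      case (elim h)
      interpret bounded_linear "T \<tau>" using bl tau by simp
      have "T \<tau> (T h x) = T (\<tau>+h) x" using comm elim tau by simp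
      moreover have "integral {0..\<tau>} G + integral {\<tau>..\<tau>+h} G = integral {0..\<tau>+h} G"
        by (rule Henstock_Kurzweil_Integration.integral_combine) (use elim tau intg in \<open>auto simp: G_def\<close>)
      ultimately show ?case unfolding g_def
        by (simp add: diff scale algebra_simps) (metis scaleR_add_right)
    qed
    ultimately have "((\<lambda>h. inverse h *\<^sub>R (g (\<tau>+h) - g \<tau>)) \<longlongrightarrow> T \<tau> (A x) - G \<tau>) (at_right 0)"
      by (rule Lim_transform_eventually)
    thus "((\<lambda>h. inverse h *\<^sub>R (g (\<tau>+h) - g \<tau>)) \<longlongrightarrow> 0) (at_right 0)"
      by (simp add: G_def)
  qed
  thus ?thesis by (simp add: g_def T0 G_def algebra_simps)
qed

end


lemma deriv_int:
  fixes f :: "real \<Rightarrow> 'a::banach"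
  assumes f: "continuous_on {0..} f" and t: "t \<ge> 0"
  shows "((\<lambda>u. integral {0..u} f) has_vector_derivative f t) (at t within {0..})"
proof -
  have "continuous_on {0..t+1} f" by (rule continuous_on_subset[OF f]) auto
  hence d: "((\<lambda>u. integral {0..u} f) has_vector_derivative f t) (at t within {0..t+1})"
    using t by (intro integral_has_vector_derivative) auto
  have "at t within {0..t+1} = at t within {0..}"
    by (rule at_within_nhd[where S="{..<t+1}"]) auto
  thus ?thesis using d by simp
qed

lemma not_bot0: "at (0::real) within {0..} \<noteq> bot"
proof -
  have "at (0::real) within {0..1} \<noteq> bot" by (simp add: at_within_Icc_at_right)
  moreover have "at (0::real) within {0..1} = at 0 within {0..}"
    by (rule at_within_nhd[where S="{..<1}"]) auto
  ultimately show ?thesis by simp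
qed

context sg
begin

lemma Cc:
  fixes C :: "'a \<Rightarrow> 'y::banach" and x :: "real \<Rightarrow> 'a"
  assumes gb: "graph_bounded D A C" and xD: "\<forall>t\<ge>0. x t \<in> D"
    and xc: "continuous_on {0..} x" and Ac: "continuous_on {0..} (\<lambda>t. A (x t))"
  shows "continuous_on {0..} (\<lambda>t. C (x t))"
proof -
  from gb obtain K where K: "\<forall>x\<in>D. norm (C x) \<le> K * (norm x + norm (A x))"
    and add: "\<forall>x\<in>D. \<forall>z\<in>D. C (x + z) = C x + C z" unfolding graph_bounded_def by blast
  have Cdiff: "C a - C b = C (a - b)" if "a \<in> D" "b \<in> D" for a b
    using add lin_diff[OF that] that by (metis add_diff_cancel diff_add_cancel)
  show ?thesis unfolding continuous_on_def
  proof
    fix t :: real assume t: "t \<in> {0..}"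
    have l1: "((\<lambda>s. x s - x t) \<longlongrightarrow> 0) (at t within {0..})"
      using xc t by (simp add: continuous_on_def Lim_null[symmetric])
    have l2: "((\<lambda>s. A (x s) - A (x t)) \<longlongrightarrow> 0) (at t within {0..})"
      using Ac t by (simp add: continuous_on_def Lim_null[symmetric])
    have "((\<lambda>s. K * (norm (x s - x t) + norm (A (x s) - A (x t)))) \<longlongrightarrow> K * (0 + 0)) (at t within {0..})"
      by (intro tendsto_intros tendsto_norm_zero l1 l2)
    hence g0: "((\<lambda>s. K * (norm (x s - x t) + norm (A (x s) - A (x t)))) \<longlongrightarrow> 0) (at t within {0..})"
      by simp
    have ev: "eventually (\<lambda>s. norm (C (x s) - C (x t)) \<le> K * (norm (x s - x t) + norm (A (x s) - A (x t)))) (at t within {0..})"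
      unfolding eventually_at_filter
    proof (intro always_eventually allI impI)
      fix s assume "s \<noteq> t" "s \<in> {0..}"
      hence "x s \<in> D" "x t \<in> D" using xD t by auto
      thus "norm (C (x s) - C (x t)) \<le> K * (norm (x s - x t) + norm (A (x s) - A (x t)))"
        using K lin_diff Cdiff by metis
    qed
    have "((\<lambda>s. C (x s) - C (x t)) \<longlongrightarrow> 0) (at t within {0..})"
      by (rule Lim_null_comparison[OF ev g0])
    thus "((\<lambda>s. C (x s)) \<longlongrightarrow> C (x t)) (at t within {0..})"
      by (simp add: Lim_null[of _ "C (x t)"])
  qed
qed

end

lemma dir:
  fixes D D' :: "'x::banach set" and A A' :: "'x \<Rightarrow> 'x"
    and B B' :: "'u::banach \<Rightarrow> 'x" and C C' :: "'x \<Rightarrow> 'y::banach"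
  assumes g: "is_c0_generator D A" and bB: "bounded_linear B" and gb: "graph_bounded D A C"
    and bB': "bounded_linear B'" and eq: "Sys D A B C = Sys D' A' B' C'"
  shows "D \<subseteq> D' \<and> (\<forall>x\<in>D. A' x = A x \<and> C' x = C x) \<and> B' = B"
proof -
  obtain T where c0: "c0_semigroup T" and gen: "generates T D A"
    using g unfolding is_c0_generator_def by blast
  interpret sg T D A using c0 gen by unfold_locales
  have B0: "B 0 = 0" "B' 0 = 0" using bB bB' by (simp_all add: linear_simps)
  have part1: "x0 \<in> D' \<and> A' x0 = A x0 \<and> C' x0 = C x0" if x0: "x0 \<in> D" for x0
  proof -
    define xo where "xo = (\<lambda>t. x0 + integral {0..t} (\<lambda>s. T s (A x0)))"
    have xoT: "xo t = T t x0" if "t \<ge> 0" for t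
      using orbit_int[OF x0 that] by (simp add: xo_def)
    have xD: "\<forall>t\<ge>0. xo t \<in> D" using orbit[OF x0] xoT by simp
    have xA: "A (xo t) = T t (A x0)" if "t \<ge> 0" for t using orbit[OF x0 that] xoT[OF that] by simp
    have xc: "continuous_on {0..} xo"
      by (rule continuous_on_eq[OF cont[of x0]]) (simp add: xoT)
    have Ac: "continuous_on {0..} (\<lambda>t. A (xo t))"
      by (rule continuous_on_eq[OF cont[of "A x0"]]) (simp add: xA)
    have der: "(xo has_vector_derivative T t (A x0)) (at t within {0..})" if "t \<ge> 0" for t
      unfolding xo_def
      using has_vector_derivative_add[OF has_vector_derivative_const deriv_int[OF cont that]] by simp
    have yc: "continuous_on {0..} (\<lambda>t. C (xo t))" by (rule Cc[OF gb xD xc Ac])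
    have "((\<lambda>_. 0), xo, (\<lambda>t. C (xo t))) \<in> Sys D A B C"
      unfolding Sys_def using xc xD Ac der yc B0
      by (auto intro!: exI[of _ "\<lambda>t. T t (A x0)"] cont simp: xA)
    hence "((\<lambda>_. 0), xo, (\<lambda>t. C (xo t))) \<in> Sys D' A' B' C'" using eq by simp
    then obtain x'' where m1: "\<forall>t\<ge>0. xo t \<in> D'"
      and m2: "\<forall>t\<ge>0. (xo has_vector_derivative x'' t) (at t within {0..})"
      and m3: "\<forall>t\<ge>0. x'' t = A' (xo t) + B' 0" and m4: "\<forall>t\<ge>0. C (xo t) = C' (xo t)"
      unfolding Sys_def by auto
    have xo0: "xo 0 = x0" by (simp add: xo_def)
    have "x'' 0 = T 0 (A x0)"
      using vector_derivative_unique_within[OF not_bot0 m2[rule_format, of 0] der[of 0]] by simp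
    thus ?thesis using m1 m3 m4 xo0 B0 T0 by auto
  qed
  have part2: "B' u0 = B u0" for u0
  proof -
    define z where "z = B u0"
    define W where "W = (\<lambda>t. integral {0..t} (\<lambda>s. T s z))"
    have WD: "\<forall>t\<ge>0. W t \<in> D" and WA: "\<And>t. t \<ge> 0 \<Longrightarrow> A (W t) = T t z - z"
      using integ unfolding W_def by auto
    have der: "(W has_vector_derivative T t z) (at t within {0..})" if "t \<ge> 0" for t
      unfolding W_def by (rule deriv_int[OF cont that])
    have Wc: "continuous_on {0..} W" unfolding continuous_on_eq_continuous_within
      by (auto intro: has_vector_derivative_continuous[OF der])
    have Ac: "continuous_on {0..} (\<lambda>t. A (W t))"
      by (rule continuous_on_eq[of _ "\<lambda>t. T t z - z"]) (auto intro!: continuous_intros cont simp: WA)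
    have yc: "continuous_on {0..} (\<lambda>t. C (W t))" by (rule Cc[OF gb WD Wc Ac])
    have "((\<lambda>_. u0), W, (\<lambda>t. C (W t))) \<in> Sys D A B C"
      unfolding Sys_def using Wc WD Ac der yc
      by (auto intro!: exI[of _ "\<lambda>t. T t z"] cont simp: WA z_def)
    hence "((\<lambda>_. u0), W, (\<lambda>t. C (W t))) \<in> Sys D' A' B' C'" using eq by simp
    then obtain x'' where m2: "\<forall>t\<ge>0. (W has_vector_derivative x'' t) (at t within {0..})"
      and m3: "\<forall>t\<ge>0. x'' t = A' (W t) + B' u0"
      unfolding Sys_def by auto
    have W0: "W 0 = 0" by (simp add: W_def)
    have "x'' 0 = T 0 z"
      using vector_derivative_unique_within[OF not_bot0 m2[rule_format, of 0] der[of 0]] by simp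
    moreover have "A' 0 = 0" using part1[of 0] zero by simp
    ultimately show ?thesis using m3 W0 T0 by (simp add: z_def)
  qed
  show ?thesis using part1 part2 by auto
qed


theorem proposition2p4:
  fixes S :: "((real \<Rightarrow> 'u::banach) \<times> (real \<Rightarrow> 'x::banach) \<times> (real \<Rightarrow> 'y::banach)) set"
    and D D' :: "'x set" and A A' :: "'x \<Rightarrow> 'x"
    and B B' :: "'u \<Rightarrow> 'x" and C C' :: "'x \<Rightarrow> 'y"
  assumes "is_c0_generator D A" and "is_c0_generator D' A'"
    and "bounded_linear B" and "bounded_linear B'"
    and "graph_bounded D A C" and "graph_bounded D' A' C'"
    and "S = Sys D A B C" and "S = Sys D' A' B' C'"
  shows "D = D' \<and> (\<forall>x\<in>D. A x = A' x) \<and> B = B' \<and> (\<forall>x\<in>D. C x = C' x)"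
proof -
  have 1: "D \<subseteq> D' \<and> (\<forall>x\<in>D. A' x = A x \<and> C' x = C x) \<and> B' = B"
    using dir[of D A B C B' D' A' C'] assms by simp
  have 2: "D' \<subseteq> D \<and> (\<forall>x\<in>D'. A x = A' x \<and> C x = C' x) \<and> B = B'"
    using dir[of D' A' B' C' B D A C] assms by simp
  show ?thesis using 1 2 by auto
qed

end
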